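(* Let $J,\mu,\Delta\in\mathbb{R}$, $T>0$, let $(\kappa_l)_{l\ge1}$ be any real sequence, and let $N\ge4$ be even. Then for every $k\in\{(2n+1)\pi/N: n=0,\dots,N-1\}$ with $\epsilon(k)>0$, $$\mathscr{E}_J(k)\le\sqrt{2}\,T .$$ In particular $\mathscr{E}_J$ is bounded uniformly in $k$ and $N$, and the uncontrolled quantum Fisher information $I(J)=\big(\sum_k\mathscr{E}_J(k)\big)^2$ satisfies $I(J)\le 2T^2N^2$, so it is at most of Heisenberg scaling.
   Context: Let $f_N(k)=2\sum_{l=1}^{N/2-1}\kappa_l\sin(kl)+\kappa_{N/2}$ and $\epsilon(k)=\sqrt{[\Delta f_N(k)/2]^2+(J\cos k+\mu)^2}$ (the Bogoliubov quasiparticle energy of the long-range Kitaev chain). For a parameter $\theta$, given real functions $a_\theta(k)$ and $\xi_\theta(k)$, set $$\mathscr{E}_\theta(k)=\Big\{T^2a_\theta(k)^2+\tfrac14\xi_\theta(k)^2\sin^2[2\epsilon(k)T]+\tfrac14\xi_\theta(k)^2\big(1-\cos[2\epsilon(k)T]\big)^2\Big\}^{1/2},$$ the single-mode eigenvalues of the estimation generator. For $\theta=J$: $a_J(k)=\partial_J\epsilon(k)=\cos k\,(J\cos k+\mu)/\epsilon(k)$ and $\xi_J(k)=\Delta f_N(k)\cos k/[2\epsilon(k)^2]$. *)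

theory Defs
  imports Complex_Main
begin

text \<open>Long-range Kitaev chain. The couplings kappa are indexed by l = 1, 2, ...
  (kappa 0 is unused). N is the (even) chain length.\<close>

definition fN :: "(nat \<Rightarrow> real) \<Rightarrow> nat \<Rightarrow> real \<Rightarrow> real" where
  "fN \<kappa> N k = 2 * (\<Sum>l=1..N div 2 - 1. \<kappa> l * sin (k * real l)) + \<kappa> (N div 2)"

definition eps :: "(nat \<Rightarrow> real) \<Rightarrow> nat \<Rightarrow> real \<Rightarrow> real \<Rightarrow> real \<Rightarrow> real \<Rightarrow> real" where
  "eps \<kappa> N J \<mu> \<Delta> k = sqrt ((\<Delta> * fN \<kappa> N k / 2)^2 + (J * cos k + \<mu>)^2)"

definition scrE :: "real \<Rightarrow> real \<Rightarrow> real \<Rightarrow> real \<Rightarrow> real" where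
  "scrE T e a \<xi> = sqrt (T^2 * a^2 + (1/4) * \<xi>^2 * (sin (2 * e * T))^2
                     + (1/4) * \<xi>^2 * (1 - cos (2 * e * T))^2)"

definition a_J :: "(nat \<Rightarrow> real) \<Rightarrow> nat \<Rightarrow> real \<Rightarrow> real \<Rightarrow> real \<Rightarrow> real \<Rightarrow> real" where
  "a_J \<kappa> N J \<mu> \<Delta> k = cos k * (J * cos k + \<mu>) / eps \<kappa> N J \<mu> \<Delta> k"

definition xi_J :: "(nat \<Rightarrow> real) \<Rightarrow> nat \<Rightarrow> real \<Rightarrow> real \<Rightarrow> real \<Rightarrow> real \<Rightarrow> real" where
  "xi_J \<kappa> N J \<mu> \<Delta> k = \<Delta> * fN \<kappa> N k * cos k / (2 * (eps \<kappa> N J \<mu> \<Delta> k)^2)"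

definition scrE_J :: "(nat \<Rightarrow> real) \<Rightarrow> nat \<Rightarrow> real \<Rightarrow> real \<Rightarrow> real \<Rightarrow> real \<Rightarrow> real \<Rightarrow> real" where
  "scrE_J \<kappa> N J \<mu> \<Delta> T k =
     scrE T (eps \<kappa> N J \<mu> \<Delta> k) (a_J \<kappa> N J \<mu> \<Delta> k) (xi_J \<kappa> N J \<mu> \<Delta> k)"

definition kmom :: "nat \<Rightarrow> nat \<Rightarrow> real" where
  "kmom N n = (2 * real n + 1) * pi / real N"

end

theory Submission
  imports Defs
begin

lemma trig_id: "(sin (2*y))^2 + (1 - cos (2*y))^2 = 4 * (sin (y::real))^2"
proof -
  have a: "sin (2*y) = 2*sin y*cos y" by (rule sin_double)
  have b: "cos (2*y) = 1 - 2*(sin y)^2" by (rule cos_double_sin)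
  have c: "(cos y)^2 = 1 - (sin y)^2" by (rule cos_squared_eq)
  have "(sin (2*y))^2 + (1 - cos (2*y))^2 = 4*(sin y)^2*(cos y)^2 + 4*(sin y)^2*(sin y)^2"
    unfolding a b by (simp add: power2_eq_square algebra_simps)
  also have "\<dots> = 4*(sin y)^2" unfolding c by (simp add: algebra_simps power2_eq_square)
  finally show ?thesis .
qed

lemma key:
  fixes T e A B c :: real
  assumes T: "T > 0" and e: "e > 0" and ee: "e^2 = A^2 + B^2" and c: "c^2 \<le> 1"
  shows "scrE T e (c*A/e) (B*c/(e^2)) \<le> T"
proof -
  define s where "s = sin (e*T)"
  have s: "s^2 \<le> (e*T)^2"
    using abs_sin_x_le_abs_x[of "e*T"] unfolding s_def
    by (metis abs_ge_zero power2_abs power_mono)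
  have inner: "T^2 * (c*A/e)^2 + (1/4) * (B*c/e^2)^2 * (sin (2 * e * T))^2
               + (1/4) * (B*c/e^2)^2 * (1 - cos (2 * e * T))^2
             = T^2 * (c*A/e)^2 + (B*c/e^2)^2 * s^2"
  proof -
    have t: "(sin (2 * e * T))^2 + (1 - cos (2 * e * T))^2 = 4 * s^2"
      using trig_id[of "e*T"] unfolding s_def by (simp add: mult.assoc)
    have "(1/4) * (B*c/e^2)^2 * (sin (2 * e * T))^2 + (1/4) * (B*c/e^2)^2 * (1 - cos (2 * e * T))^2
        = (1/4) * (B*c/e^2)^2 * ((sin (2 * e * T))^2 + (1 - cos (2 * e * T))^2)"
      by (simp only: distrib_left)
    also have "\<dots> = (B*c/e^2)^2 * s^2" using t by simp
    finally show ?thesis by (simp only: add.assoc)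
  qed
  have h1: "(B*c/e^2)^2 * s^2 \<le> (B*c/e^2)^2 * (e*T)^2"
    by (rule mult_left_mono[OF s]) simp
  have h2: "(B*c/e^2)^2 * (e*T)^2 = T^2 * (B^2*c^2/e^2)"
    using e by (simp add: field_simps power2_eq_square)
  have h3: "T^2 * (c*A/e)^2 = T^2 * (A^2*c^2/e^2)"
    by (simp add: field_simps power2_eq_square)
  have h4: "A^2*c^2/e^2 + B^2*c^2/e^2 \<le> 1"
  proof -
    have q: "(A^2+B^2)/e^2 = 1" using e unfolding ee[symmetric] by simp
    have "A^2*c^2/e^2 + B^2*c^2/e^2 = c^2 * ((A^2+B^2)/e^2)" using e by (simp add: field_simps)
    also have "\<dots> = c^2" by (simp only: q mult_1_right)
    finally show ?thesis using c by simp
  qed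
  have "T^2 * (c*A/e)^2 + (B*c/e^2)^2 * s^2 \<le> T^2 * (A^2*c^2/e^2 + B^2*c^2/e^2)"
    using h1 h2 h3 by (simp add: algebra_simps)
  also have "\<dots> \<le> T^2" using h4 by (simp add: mult_left_le)
  finally have "T^2 * (c*A/e)^2 + (B*c/e^2)^2 * s^2 \<le> T^2" .
  hence "scrE T e (c*A/e) (B*c/(e^2)) \<le> sqrt (T^2)"
    unfolding scrE_def using inner by (simp only:) (rule real_sqrt_le_mono)
  thus ?thesis using T by simp
qed

lemma pointwise:
  assumes T: "T > 0" and e: "eps \<kappa> N J \<mu> \<Delta> k > 0"
  shows "scrE_J \<kappa> N J \<mu> \<Delta> T k \<le> T"
proof -
  let ?e = "eps \<kappa> N J \<mu> \<Delta> k" and ?A = "J * cos k + \<mu>" and ?B = "\<Delta> * fN \<kappa> N k / 2"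
  have ee: "?e^2 = ?A^2 + ?B^2" unfolding eps_def
    by (simp add: add_nonneg_nonneg)
  have c: "(cos k)^2 \<le> 1" using sin_cos_squared_add[of k] by (metis le_add_same_cancel2 zero_le_power2)
  have "a_J \<kappa> N J \<mu> \<Delta> k = cos k * ?A / ?e" by (simp add: a_J_def)
  moreover have "xi_J \<kappa> N J \<mu> \<Delta> k = ?B * cos k / ?e^2" by (simp add: xi_J_def)
  ultimately show ?thesis unfolding scrE_J_def using key[OF T e ee c] by simp
qed

theorem mainTheorem8:
  fixes J \<mu> \<Delta> T :: real and \<kappa> :: "nat \<Rightarrow> real" and N :: nat
  assumes "T > 0" and "even N" and "N \<ge> 4"
  shows "(\<forall>n<N. eps \<kappa> N J \<mu> \<Delta> (kmom N n) > 0 \<longrightarrow>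
            scrE_J \<kappa> N J \<mu> \<Delta> T (kmom N n) \<le> sqrt 2 * T)
       \<and> (\<Sum>n\<in>{n. n < N \<and> eps \<kappa> N J \<mu> \<Delta> (kmom N n) > 0}.
            scrE_J \<kappa> N J \<mu> \<Delta> T (kmom N n))^2 \<le> 2 * T^2 * (real N)^2"
proof
  have s2: "T \<le> sqrt 2 * T" using assms(1) by (simp add: mult_le_cancel_right1)
  show "\<forall>n<N. eps \<kappa> N J \<mu> \<Delta> (kmom N n) > 0 \<longrightarrow>
            scrE_J \<kappa> N J \<mu> \<Delta> T (kmom N n) \<le> sqrt 2 * T"
    using pointwise[OF assms(1)] s2 by (meson order_trans)
  let ?S = "{n. n < N \<and> eps \<kappa> N J \<mu> \<Delta> (kmom N n) > 0}"
  have fin: "finite ?S" by simp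
  have nn: "0 \<le> (\<Sum>n\<in>?S. scrE_J \<kappa> N J \<mu> \<Delta> T (kmom N n))"
    by (intro sum_nonneg) (simp add: scrE_J_def scrE_def)
  have "(\<Sum>n\<in>?S. scrE_J \<kappa> N J \<mu> \<Delta> T (kmom N n)) \<le> (\<Sum>n\<in>?S. T)"
    by (intro sum_mono) (use pointwise[OF assms(1)] in auto)
  also have "\<dots> = real (card ?S) * T" by simp
  also have "\<dots> \<le> real N * T"
  proof -
    have "card ?S \<le> card {..<N}" by (intro card_mono) auto
    thus ?thesis using assms(1) by simp
  qed
  finally have le: "(\<Sum>n\<in>?S. scrE_J \<kappa> N J \<mu> \<Delta> T (kmom N n)) \<le> real N * T" .
  have "(\<Sum>n\<in>?S. scrE_J \<kappa> N J \<mu> \<Delta> T (kmom N n))^2 \<le> (real N * T)^2"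
    by (rule power_mono[OF le nn])
  also have "\<dots> \<le> 2 * T^2 * (real N)^2" by (simp add: power_mult_distrib)
  finally show "(\<Sum>n\<in>?S. scrE_J \<kappa> N J \<mu> \<Delta> T (kmom N n))^2 \<le> 2 * T^2 * (real N)^2" .
qed

end
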